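(* Let $\mathbf d=(d_1,\ldots,d_n)$ be a degree sequence, $w\in[n]$, $\hat n$ and $V_w$ as in the context, and assume $\hat n<n$. Let $\mathfrak s_{n,w}(w)$ be the six-length of $w$ in a random functional graph on $V_w$ with in-degrees $(d_v)_{v\in V_w}$ (the graph of a uniformly random $f:V_w\to V_w$ with $|f^{-1}(\{v\})|=d_v$ for all $v\in V_w$), and let $\mathfrak s_n(w)$ be the six-length of $w$ in a random functional graph with degree sequence $\mathbf d$. Then \[\mathfrak s_n(w)\overset{d}{=}\mathcal R\big(n-\hat n,\ \mathfrak s_{n,w}(w),\ \hat n+1-\mathfrak s_{n,w}(w)\big),\] where the Pólya urn quantities $\{\mathcal R(m,a,b)\}$ are independent of $\mathfrak s_{n,w}(w)$; that is, for every $r$, $\mathbb P(\mathfrak s_n(w)=r)=\sum_{s}\mathbb P(\mathfrak s_{n,w}(w)=s)\,\mathbb P(\mathcal R(n-\hat n,s,\hat n+1-s)=r)$.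
   Context: A degree sequence is $\mathbf d=(d_1,\ldots,d_n)\in\mathbb N_0^n$ with $\sum_j d_j=n$; a random functional graph with degree sequence $\mathbf d$ is the graph (edges $(v,f(v))$) of a uniform $F\in\{f:[n]\to[n]: |f^{-1}(\{i\})|=d_i\ \forall i\}$. Six-length: $\mathfrak s_f(v)=\min\{k\in\mathbb N: f^{(k)}(v)\in\{f^{(j)}(v):0\le j\le k-1\}\}$. Let $\sigma^2=\frac1n\sum_j d_j^2-1$ and $\hat n=\lfloor (n\sigma^2)^{4/3}\rfloor$; when $\hat n<n$, $V_w=[n]\setminus\{v_1,\ldots,v_{n-\hat n}\}$ where $v_1,\ldots,v_{n-\hat n}$ are distinct vertices in $[n]\setminus\{w\}$ with $d_{v_i}=1$ chosen by a fixed deterministic rule. Pólya urn: an $(a,b)$-Pólya urn starts with $a$ red and $b$ blue balls; at each step a ball is drawn uniformly at random and returned together with one additional ball of the same colour; $\mathcal R(m,a,b)$ is the number of red balls after $m$ balls have been added. *)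

theory Defs
  imports "HOL-Probability.Probability"
begin

definition fgraphs :: "nat set \<Rightarrow> (nat \<Rightarrow> nat) \<Rightarrow> (nat \<Rightarrow> nat) set" where
  "fgraphs V d = {f \<in> V \<rightarrow>\<^sub>E V. \<forall>v\<in>V. card {u\<in>V. f u = v} = d v}"

definition sixlen :: "(nat \<Rightarrow> nat) \<Rightarrow> nat \<Rightarrow> nat" where
  "sixlen f v = (LEAST k. k \<ge> 1 \<and> (f ^^ k) v \<in> (\<lambda>j. (f ^^ j) v) ` {0..k-1})"

definition sixlen_dist :: "nat set \<Rightarrow> (nat \<Rightarrow> nat) \<Rightarrow> nat \<Rightarrow> nat pmf" where
  "sixlen_dist V d w = map_pmf (\<lambda>f. sixlen f w) (pmf_of_set (fgraphs V d))"

text \<open>Polya urn: distribution of the number of red balls after m balls have been added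
  to an urn starting with a red and b blue balls (recursion on the first draw).\<close>
fun polya :: "nat \<Rightarrow> nat \<Rightarrow> nat \<Rightarrow> nat pmf" where
  "polya 0 a b = return_pmf a"
| "polya (Suc m) a b = bind_pmf (bernoulli_pmf (real a / real (a + b)))
      (\<lambda>c. if c then polya m (a + 1) b else polya m a (b + 1))"

definition sigma2 :: "nat \<Rightarrow> (nat \<Rightarrow> nat) \<Rightarrow> real" where
  "sigma2 n d = (1 / real n) * (\<Sum>j\<in>{1..n}. real (d j) ^ 2) - 1"

definition nhat :: "nat \<Rightarrow> (nat \<Rightarrow> nat) \<Rightarrow> nat" where
  "nhat n d = nat \<lfloor>(real n * sigma2 n d) powr (4 / 3)\<rfloor>"

end

theory Submission
  imports Defs
begin



lemma orbit_in: "g \<in> V \<rightarrow> V \<Longrightarrow> w \<in> V \<Longrightarrow> (g ^^ j) w \<in> V"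
  by (induction j) auto

lemma sixlen_eqI:
  assumes "k \<ge> 1" "inj_on (\<lambda>j. (f^^j) w) {..<k}" "(f^^k) w \<in> (\<lambda>j. (f^^j) w) ` {..<k}"
  shows "sixlen f w = k"
  unfolding sixlen_def
proof (rule Least_equality)
  have e: "{0..k-1} = {..<k}" using assms(1) by auto
  show "1 \<le> k \<and> (f ^^ k) w \<in> (\<lambda>j. (f ^^ j) w) ` {0..k - 1}" using assms e by auto
next
  fix y assume y: "1 \<le> y \<and> (f ^^ y) w \<in> (\<lambda>j. (f ^^ j) w) ` {0..y - 1}"
  show "k \<le> y"
  proof (rule ccontr)
    assume "\<not> k \<le> y"
    moreover obtain j where "j \<le> y - 1" "(f^^y) w = (f^^j) w" using y by auto
    ultimately have "j < y" "y < k" "1 \<le> y" using y by auto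
    then show False using inj_onD[OF assms(2), of y j] \<open>(f^^y) w = (f^^j) w\<close> by auto
  qed
qed

lemma sixlen_props:
  assumes "finite V" "g \<in> V \<rightarrow> V" "w \<in> V"
  shows "1 \<le> sixlen g w" "sixlen g w \<le> card V"
    "inj_on (\<lambda>j. (g^^j) w) {..<sixlen g w}"
    "(g^^sixlen g w) w \<in> (\<lambda>j. (g^^j) w) ` {..<sixlen g w}"
proof -
  define P where "P = (\<lambda>k. k \<ge> 1 \<and> (g ^^ k) w \<in> (\<lambda>j. (g ^^ j) w) ` {0..k-1})"
  have s: "sixlen g w = (LEAST k. P k)" unfolding sixlen_def P_def by simp
  have "\<not> inj_on (\<lambda>j. (g^^j) w) {..card V}"
  proof
    assume "inj_on (\<lambda>j. (g^^j) w) {..card V}"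
    then have "card {..card V} \<le> card V"
      using card_inj_on_le[of _ "{..card V}" V] orbit_in[OF assms(2,3)] assms(1) by auto
    then show False by simp
  qed
  then obtain i j where ij: "i \<le> card V" "j \<le> card V" "i \<noteq> j" "(g^^i) w = (g^^j) w"
    unfolding inj_on_def by auto
  then obtain a b where ab: "a < b" "b \<le> card V" "(g^^a) w = (g^^b) w"
    by (metis linorder_neqE_nat)
  have Pb: "P b" unfolding P_def using ab by (auto intro!: image_eqI[of _ _ a])
  have PL: "P (sixlen g w)" unfolding s by (rule LeastI[of P b, OF Pb])
  show "1 \<le> sixlen g w" using PL P_def by auto
  show "sixlen g w \<le> card V" unfolding s using Least_le[of P b, OF Pb] ab by simp
  have e: "{0..sixlen g w - 1} = {..<sixlen g w}" using PL P_def by auto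
  show "(g^^sixlen g w) w \<in> (\<lambda>j. (g^^j) w) ` {..<sixlen g w}" using PL P_def e by auto
  show "inj_on (\<lambda>j. (g^^j) w) {..<sixlen g w}"
  proof (rule inj_onI, rule ccontr)
    fix x y assume xy: "x \<in> {..<sixlen g w}" "y \<in> {..<sixlen g w}" "(g^^x) w = (g^^y) w" "x \<noteq> y"
    obtain p q where pq: "p < q" "q < sixlen g w" "(g^^p) w = (g^^q) w"
      using xy by (metis lessThan_iff linorder_neqE_nat)
    have "P q" unfolding P_def using pq by (auto intro!: image_eqI[of _ _ p])
    then show False using not_less_Least[of q P] pq s by simp
  qed
qed

lemma orbit_closed:
  fixes g :: "'a \<Rightarrow> 'a"
  assumes "1 \<le> s" "(g^^s) w \<in> (\<lambda>j. (g^^j) w) ` {..<s}"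
  shows "(g^^j) w \<in> (\<lambda>j. (g^^j) w) ` {..<s}"
proof (induction j)
  case 0 then show ?case using assms by (auto intro!: image_eqI[of _ _ 0])
next
  case (Suc j)
  then obtain i where i: "i < s" "(g^^j) w = (g^^i) w" by auto
  have "(g^^Suc j) w = g ((g^^j) w)" by simp
  also have "\<dots> = (g^^Suc i) w" using i by simp
  finally have "(g^^Suc j) w = (g^^Suc i) w" .
  show ?case
  proof (cases "Suc i < s")
    case True then show ?thesis using \<open>(g^^Suc j) w = (g^^Suc i) w\<close> by blast
  next
    case False then have "Suc i = s" using i by simp
    then show ?thesis using \<open>(g^^Suc j) w = (g^^Suc i) w\<close> assms(2) by simp
  qed
qed




definition ins :: "nat \<Rightarrow> (nat \<Rightarrow> nat) \<Rightarrow> nat \<Rightarrow> (nat \<Rightarrow> nat)" where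
  "ins v g x = (if x = v then g(v := v) else g(x := v, v := g x))"

definition contr :: "nat set \<Rightarrow> nat \<Rightarrow> (nat \<Rightarrow> nat) \<Rightarrow> (nat \<Rightarrow> nat)" where
  "contr V v f = (\<lambda>u. if u \<in> V - {v} then (if f u = v then f v else f u) else undefined)"

lemma ins_PiE:
  assumes "g \<in> (V - {v}) \<rightarrow>\<^sub>E (V - {v})" "x \<in> V" "v \<in> V"
  shows "ins v g x \<in> V \<rightarrow>\<^sub>E V"
  using assms unfolding ins_def by (auto simp: PiE_def Pi_def extensional_def)

lemma ins_v:
  assumes "g \<in> (V - {v}) \<rightarrow> (V - {v})" "x \<in> V" "v \<in> V" "u \<in> V"
  shows "(ins v g x u = v) = (u = x)"
  using assms unfolding ins_def by (auto simp: Pi_def)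

lemma contr_ins:
  assumes "g \<in> (V - {v}) \<rightarrow>\<^sub>E (V - {v})" "x \<in> V" "v \<in> V"
  shows "contr V v (ins v g x) = g"
proof
  fix u show "contr V v (ins v g x) u = g u"
    using assms unfolding ins_def contr_def by (auto simp: PiE_def Pi_def extensional_def)
qed

lemma ins_deg:
  assumes "g \<in> (V - {v}) \<rightarrow> (V - {v})" "x \<in> V" "v \<in> V" "finite V" "y \<in> V - {v}"
  shows "card {u\<in>V. ins v g x u = y} = card {u\<in>V-{v}. g u = y}"
proof (cases "x = v")
  case True
  then have "{u\<in>V. ins v g x u = y} = {u\<in>V-{v}. g u = y}"
    using assms unfolding ins_def by auto
  then show ?thesis by simp
next
  case False
  show ?thesis
  proof (cases "g x = y")
    case True
    let ?A = "{u\<in>V-{v}. g u = y}"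
    have "{u\<in>V. ins v g x u = y} = insert v (?A - {x})"
      using assms False True unfolding ins_def by auto
    moreover have "x \<in> ?A" using True False assms by auto
    moreover have "finite ?A" using assms by auto
    moreover have "v \<notin> ?A - {x}" by auto
    ultimately have "card {u\<in>V. ins v g x u = y} = Suc (card (?A - {x}))" by simp
    also have "\<dots> = card ?A" using \<open>x \<in> ?A\<close> \<open>finite ?A\<close> by (metis card_Suc_Diff1)
    finally show ?thesis .
  next
    case False2: False
    then have "{u\<in>V. ins v g x u = y} = {u\<in>V-{v}. g u = y}"
      using assms False unfolding ins_def by auto
    then show ?thesis by simp
  qed
qed

lemma ins_fgraphs:
  assumes "g \<in> fgraphs (V - {v}) d" "x \<in> V" "v \<in> V" "finite V" "d v = 1"
  shows "ins v g x \<in> fgraphs V d"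
proof -
  have g: "g \<in> (V - {v}) \<rightarrow>\<^sub>E (V - {v})" using assms(1) unfolding fgraphs_def by auto
  then have gp: "g \<in> (V - {v}) \<rightarrow> (V - {v})" by auto
  have "card {u\<in>V. ins v g x u = y} = d y" if "y \<in> V" for y
  proof (cases "y = v")
    case True
    have "{u\<in>V. ins v g x u = y} = {x}" using ins_v[OF gp assms(2,3)] True assms(2) by auto
    then show ?thesis using True assms by simp
  next
    case False
    then show ?thesis using ins_deg[OF gp assms(2,3,4), of y] that assms(1) unfolding fgraphs_def by auto
  qed
  then show ?thesis using ins_PiE[OF g assms(2,3)] unfolding fgraphs_def by auto
qed

lemma fgraphs_contr:
  assumes "f \<in> fgraphs V d" "v \<in> V" "finite V" "d v = 1"
  shows "\<exists>x\<in>V. contr V v f \<in> fgraphs (V - {v}) d \<and> ins v (contr V v f) x = f"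
proof -
  have f: "f \<in> V \<rightarrow>\<^sub>E V" and deg: "\<And>y. y \<in> V \<Longrightarrow> card {u\<in>V. f u = y} = d y"
    using assms(1) unfolding fgraphs_def by auto
  have "card {u\<in>V. f u = v} = 1" using deg assms by simp
  then obtain x where x: "{u\<in>V. f u = v} = {x}" by (rule card_1_singletonE)
  have xV: "x \<in> V" "f x = v" using x by blast+
  have uni: "\<And>u. u \<in> V \<Longrightarrow> f u = v \<Longrightarrow> u = x" using x by blast
  define g where "g = contr V v f"
  have fV: "f u \<in> V" if "u \<in> V" for u using f that by (rule PiE_mem)
  have gE: "g \<in> (V - {v}) \<rightarrow>\<^sub>E (V - {v})"
  proof (rule PiE_I)
    fix u assume u: "u \<in> V - {v}"
    show "g u \<in> V - {v}"
    proof (cases "f u = v")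
      case True
      then have "u = x" using uni u by blast
      then have "f v \<noteq> v" using uni[of v] assms(2) u by blast
      moreover have "g u = f v" using True u unfolding g_def contr_def by simp
      ultimately show ?thesis using fV assms(2) by simp
    next
      case False
      moreover have "g u = f u" using False u unfolding g_def contr_def by simp
      ultimately show ?thesis using fV u by simp
    qed
  next
    fix u assume nu: "u \<notin> V - {v}" show "g u = undefined" unfolding g_def contr_def using nu by (simp only: if_False)
  qed
  have fu: "f u = undefined" if "u \<notin> V" for u using f that by (auto simp: PiE_def extensional_def)
  have eq: "ins v g x = f"
  proof
    fix u show "ins v g x u = f u"
    proof (cases "u \<in> V")
      case False
      then have "u \<noteq> x" "u \<noteq> v" using xV assms(2) by auto
      then have "ins v g x u = g u" unfolding ins_def by auto
      then show ?thesis using False fu unfolding g_def contr_def by simp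
    next
      case uV: True
      show ?thesis
      proof (cases "x = v")
        case True
        then show ?thesis using xV uni[of u] uV unfolding ins_def g_def contr_def by auto
      next
        case False
        have gx: "g x = f v" using False xV unfolding g_def contr_def by simp
        show ?thesis
        proof (cases "u = v")
          case True then show ?thesis using gx \<open>x \<noteq> v\<close> unfolding ins_def by simp
        next
          case uv: False
          show ?thesis
          proof (cases "u = x")
            case True then show ?thesis using xV uv \<open>x \<noteq> v\<close> unfolding ins_def by simp
          next
            case False
            then have "f u \<noteq> v" using uni[OF uV] by auto
            then show ?thesis using False uv uV \<open>x \<noteq> v\<close> unfolding ins_def g_def contr_def by simp
          qed
        qed
      qed
    qed
  qed
  have gP: "g \<in> (V - {v}) \<rightarrow> (V - {v})" using gE by (rule PiE_mem[THEN Pi_I] | auto simp: PiE_iff)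
  have "card {u\<in>V-{v}. g u = y} = d y" if y: "y \<in> V - {v}" for y
  proof -
    have "card {u\<in>V-{v}. g u = y} = card {u\<in>V. ins v g x u = y}"
      using ins_deg[OF gP xV(1) assms(2) assms(3) y] by simp
    also have "\<dots> = card {u\<in>V. f u = y}" by (simp add: eq)
    also have "\<dots> = d y" using deg y by simp
    finally show ?thesis .
  qed
  then have "g \<in> fgraphs (V - {v}) d" using gE unfolding fgraphs_def by blast
  then show ?thesis using eq xV unfolding g_def by blast
qed

lemma fgraphs_image:
  assumes "v \<in> V" "finite V" "d v = 1"
  shows "fgraphs V d = (\<lambda>(g,x). ins v g x) ` (fgraphs (V - {v}) d \<times> V)"
    and "inj_on (\<lambda>(g,x). ins v g x) (fgraphs (V - {v}) d \<times> V)"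
proof -
  show "fgraphs V d = (\<lambda>(g,x). ins v g x) ` (fgraphs (V - {v}) d \<times> V)"
  proof
    show "fgraphs V d \<subseteq> (\<lambda>(g,x). ins v g x) ` (fgraphs (V - {v}) d \<times> V)"
      using fgraphs_contr[of _ V d v] assms by force
    show "(\<lambda>(g,x). ins v g x) ` (fgraphs (V - {v}) d \<times> V) \<subseteq> fgraphs V d"
      using ins_fgraphs assms by auto
  qed
  show "inj_on (\<lambda>(g,x). ins v g x) (fgraphs (V - {v}) d \<times> V)"
  proof (rule inj_onI, clarsimp)
    fix g x g' x' assume a: "g \<in> fgraphs (V - {v}) d" "x \<in> V" "g' \<in> fgraphs (V - {v}) d" "x' \<in> V"
      "ins v g x = ins v g' x'"
    have g: "g \<in> (V - {v}) \<rightarrow>\<^sub>E (V - {v})" "g' \<in> (V - {v}) \<rightarrow>\<^sub>E (V - {v})"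
      using a unfolding fgraphs_def by auto
    have "x = x'" using ins_v[of g V v x x] ins_v[of g' V v x' x] g a assms by auto
    moreover have "g = g'" using contr_ins[OF g(1) a(2) assms(1)] contr_ins[OF g(2) a(4) assms(1)] a by metis
    ultimately show "g = g' \<and> x = x'" by simp
  qed
qed




lemma sixlen_ins:
  assumes fin: "finite V" and g: "g \<in> (V-{v}) \<rightarrow> (V-{v})" and w: "w \<in> V-{v}" and x: "x \<in> V" and v: "v \<in> V"
  shows "sixlen (ins v g x) w =
    (if x \<in> (\<lambda>j. (g^^j) w) ` {..<sixlen g w} then sixlen g w + 1 else sixlen g w)"
proof -
  define s where "s = sixlen g w"
  define Orb where "Orb = (\<lambda>j. (g^^j) w) ` {..<s}"
  define f where "f = ins v g x"
  have fin': "finite (V - {v})" using fin by simp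
  note P = sixlen_props[OF fin' g w, folded s_def]
  have s1: "1 \<le> s" and inj: "inj_on (\<lambda>j. (g^^j) w) {..<s}" and sO: "(g^^s) w \<in> Orb"
    using P Orb_def by auto
  have clo: "(g^^j) w \<in> Orb" for j unfolding Orb_def by (rule orbit_closed[OF s1 sO[unfolded Orb_def]])
  have gin: "(g^^j) w \<in> V - {v}" for j by (rule orbit_in[OF g w])
  show ?thesis
  proof (cases "x \<in> Orb")
    case False
    have same: "(f^^j) w = (g^^j) w" for j
    proof (induction j)
      case 0 show ?case by simp
    next
      case (Suc j)
      have p: "(g^^j) w \<noteq> x" "(g^^j) w \<noteq> v" using clo[of j] False gin[of j] by auto
      have "(f^^Suc j) w = f ((g^^j) w)" using Suc by simp
      also have "\<dots> = g ((g^^j) w)" using p unfolding f_def ins_def by auto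
      finally show ?case by simp
    qed
    have "sixlen f w = sixlen g w" unfolding sixlen_def same ..
    then show ?thesis using False unfolding f_def s_def Orb_def by simp
  next
    case True
    then obtain t where t: "t < s" "x = (g^^t) w" unfolding Orb_def by auto
    have xnv: "x \<noteq> v" using gin t by auto
    have fp: "f p = (if p = v then g x else if p = x then v else g p)" for p
      unfolding f_def ins_def using xnv by auto
    define h where "h j = (if j \<le> t then (g^^j) w else if j = Suc t then v else (g^^(j-1)) w)" for j
    have fh: "j \<le> s+1 \<Longrightarrow> (f^^j) w = h j" for j
    proof (induction j)
      case 0 show ?case by (simp add: h_def)
    next
      case (Suc j)
      then have IH: "(f^^j) w = h j" by simp
      have "(f^^Suc j) w = f (h j)" using IH by simp
      also have "\<dots> = h (Suc j)"
      proof -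
        consider "j < t" | "j = t" | "j = Suc t" | "j > Suc t" by linarith
        then show ?thesis
        proof cases
          case 1
          have "(g^^j) w \<noteq> x" using inj_onD[OF inj, of j t] t 1 by auto
          moreover have "(g^^j) w \<noteq> v" using gin[of j] by auto
          ultimately show ?thesis using 1 fp unfolding h_def by simp
        next
          case 2 then show ?thesis using fp xnv t unfolding h_def by simp
        next
          case 3 then show ?thesis using fp t unfolding h_def by simp
        next
          case 4
          then have jl: "j - 1 < s" "j - 1 \<noteq> t" using Suc.prems by auto
          have "(g^^(j-1)) w \<noteq> x" using inj_onD[OF inj, of "j-1" t] t jl by auto
          moreover have "(g^^(j-1)) w \<noteq> v" using gin[of "j-1"] by auto
          moreover obtain k where "j = Suc k" using 4 by (cases j) auto
          moreover have "g ((g^^(j-1)) w) = (g^^j) w" using \<open>j = Suc k\<close> by simp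
          ultimately show ?thesis using 4 fp unfolding h_def by simp
        qed
      qed
      finally show ?case .
    qed
    have hinj: "inj_on h {..<s+1}"
    proof (rule inj_onI)
      fix i j assume ij: "i \<in> {..<s+1}" "j \<in> {..<s+1}" "h i = h j"
      show "i = j"
      proof (cases "i = Suc t \<or> j = Suc t")
        case True
        have hv: "h k = v \<Longrightarrow> k = Suc t" for k
        proof (rule ccontr)
          assume "h k = v" "k \<noteq> Suc t"
          then obtain m where "h k = (g^^m) w" unfolding h_def by (auto split: if_splits)
          then show False using gin[of m] \<open>h k = v\<close> by auto
        qed
        have hsv: "h (Suc t) = v" by (simp add: h_def)
        show ?thesis using True hv hsv ij(3) by metis
      next
        case False
        define ii where "ii = (if i \<le> t then i else i - 1)"
        define jj where "jj = (if j \<le> t then j else j - 1)"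
        have "h i = (g^^ii) w" "h j = (g^^jj) w" using False unfolding h_def ii_def jj_def by auto
        moreover have "ii < s" "jj < s" using ij t False unfolding ii_def jj_def by auto
        ultimately have "ii = jj" using inj ij(3) unfolding inj_on_def by auto
        then show ?thesis using False unfolding ii_def jj_def by (auto split: if_splits)
      qed
    qed
    have last: "(f^^(s+1)) w \<in> h ` {..<s+1}"
    proof -
      have "(f^^(s+1)) w = (g^^s) w" using fh[of "s+1"] t unfolding h_def by simp
      moreover obtain i where i: "i < s" "(g^^s) w = (g^^i) w" using sO unfolding Orb_def by auto
      moreover have "h (if i \<le> t then i else i+1) = (g^^i) w" unfolding h_def by auto
      moreover have "(if i \<le> t then i else i+1) < s + 1" using i by auto
      ultimately show ?thesis by (metis image_eqI lessThan_iff)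
    qed
    have c1: "inj_on (\<lambda>j. (f^^j) w) {..<s+1} = inj_on h {..<s+1}"
      by (rule inj_on_cong) (simp add: fh)
    have c2: "(\<lambda>j. (f^^j) w) ` {..<s+1} = h ` {..<s+1}"
      by (rule image_cong) (simp_all add: fh)
    have e1: "inj_on (\<lambda>j. (f^^j) w) {..<s+1}" using hinj c1 by simp
    have e2: "(f^^(s+1)) w \<in> (\<lambda>j. (f^^j) w) ` {..<s+1}" using last c2 by simp
    have "sixlen f w = s + 1" by (rule sixlen_eqI[OF _ e1 e2]) simp
    then show ?thesis using True unfolding f_def s_def Orb_def by simp
  qed
qed




definition step :: "nat \<Rightarrow> nat \<Rightarrow> nat pmf" where
  "step N s = map_pmf (\<lambda>c. if c then s+1 else s) (bernoulli_pmf (real s / real N))"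

lemma pmf_of_set_times:
  assumes "finite A" "A \<noteq> {}" "finite B" "B \<noteq> {}"
  shows "pmf_of_set (A \<times> B) = pair_pmf (pmf_of_set A) (pmf_of_set B)"
proof (rule pmf_eqI)
  fix i :: "'a \<times> 'b"
  obtain a b where i: "i = (a, b)" by (cases i)
  show "pmf (pmf_of_set (A \<times> B)) i = pmf (pair_pmf (pmf_of_set A) (pmf_of_set B)) i"
    using assms unfolding i pmf_pair by (simp add: card_cartesian_product indicator_def)
qed

lemma map_mem_pmf_of_set:
  assumes "finite V" "V \<noteq> {}" "O' \<subseteq> V"
  shows "map_pmf (\<lambda>x. x \<in> O') (pmf_of_set V) = bernoulli_pmf (card O' / card V)"
proof (rule pmf_eqI)
  have cV: "card V > 0" using assms by (simp add: card_gt_0_iff)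
  have cO: "card O' \<le> card V" using assms by (simp add: card_mono)
  have p0: "0 \<le> real (card O') / real (card V)" and p1: "real (card O') / real (card V) \<le> 1"
    using cV cO by auto
  fix c :: bool
  show "pmf (map_pmf (\<lambda>x. x \<in> O') (pmf_of_set V)) c = pmf (bernoulli_pmf (card O' / card V)) c"
  proof (cases c)
    case True
    have "(\<lambda>x. x \<in> O') -` {c} = O'" using True by auto
    then show ?thesis using True assms p0 p1 by (simp add: pmf_map measure_pmf_of_set Int_absorb1)
  next
    case False
    have "(\<lambda>x. x \<in> O') -` {c} = - O'" using False by auto
    moreover have "card (V \<inter> - O') = card V - card O'"
      using assms by (metis Diff_eq card_Diff_subset finite_subset)
    ultimately show ?thesis using False assms p0 p1 cO cV
      by (simp add: pmf_map measure_pmf_of_set of_nat_diff field_simps)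
  qed
qed

lemma fgraphs_finite: "finite V \<Longrightarrow> finite (fgraphs V d)"
  unfolding fgraphs_def by (rule finite_subset[OF _ finite_PiE[of V "\<lambda>_. V"]]) auto

lemma map_pair_pmf: "map_pmf f (pair_pmf p q) = bind_pmf p (\<lambda>x. map_pmf (\<lambda>y. f (x, y)) q)"
  unfolding pair_pmf_def map_bind_pmf by (simp add: map_pmf_def bind_return_pmf)

lemma one_step:
  assumes fin: "finite V" and v: "v \<in> V" and w: "w \<in> V" "w \<noteq> v" and dv: "d v = 1"
    and ne: "fgraphs (V - {v}) d \<noteq> {}"
  shows "fgraphs V d \<noteq> {}"
    "sixlen_dist V d w = bind_pmf (sixlen_dist (V - {v}) d w) (step (card V))"
proof -
  let ?B = "fgraphs (V - {v}) d"
  let ?P = "\<lambda>(g,x). ins v g x"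
  note im = fgraphs_image[OF v fin, of d, OF dv]
  have finB: "finite ?B" using fin by (simp add: fgraphs_finite)
  have VE: "V \<noteq> {}" using v by auto
  show "fgraphs V d \<noteq> {}" using im(1) ne VE by auto
  have "pmf_of_set (fgraphs V d) = map_pmf ?P (pmf_of_set (?B \<times> V))"
    unfolding im(1) by (rule map_pmf_of_set_inj[symmetric]) (use im(2) ne VE finB fin in auto)
  also have "\<dots> = map_pmf ?P (pair_pmf (pmf_of_set ?B) (pmf_of_set V))"
    using ne VE finB fin by (simp add: pmf_of_set_times)
  finally have eq1: "pmf_of_set (fgraphs V d) = map_pmf ?P (pair_pmf (pmf_of_set ?B) (pmf_of_set V))" .
  have "sixlen_dist V d w = bind_pmf (pmf_of_set ?B) (\<lambda>g. map_pmf (\<lambda>x. sixlen (ins v g x) w) (pmf_of_set V))"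
    unfolding sixlen_dist_def eq1 map_pmf_comp map_pair_pmf by (simp add: map_bind_pmf map_pmf_comp)
  also have "\<dots> = bind_pmf (pmf_of_set ?B) (\<lambda>g. step (card V) (sixlen g w))"
  proof (rule bind_pmf_cong[OF refl])
    fix g assume "g \<in> set_pmf (pmf_of_set ?B)"
    then have gB: "g \<in> ?B" using ne finB by simp
    then have gE: "g \<in> (V - {v}) \<rightarrow>\<^sub>E (V - {v})" unfolding fgraphs_def by auto
    then have gP: "g \<in> (V - {v}) \<rightarrow> (V - {v})" by (simp add: PiE_iff Pi_iff)
    have wV: "w \<in> V - {v}" using w by simp
    define s where "s = sixlen g w"
    define Orb where "Orb = (\<lambda>j. (g^^j) w) ` {..<s}"
    have fin': "finite (V - {v})" using fin by simp
    note P = sixlen_props[OF fin' gP wV, folded s_def]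
    have cO: "card Orb = s" unfolding Orb_def using P(3) by (simp add: card_image)
    have OV: "Orb \<subseteq> V" unfolding Orb_def using orbit_in[OF gP wV] by auto
    have "map_pmf (\<lambda>x. sixlen (ins v g x) w) (pmf_of_set V)
        = map_pmf (\<lambda>x. if x \<in> Orb then s + 1 else s) (pmf_of_set V)"
    proof (rule map_pmf_cong[OF refl])
      fix x assume "x \<in> set_pmf (pmf_of_set V)"
      then have "x \<in> V" using fin VE by simp
      then show "sixlen (ins v g x) w = (if x \<in> Orb then s + 1 else s)"
        using sixlen_ins[OF fin gP wV _ v] unfolding Orb_def s_def by simp
    qed
    also have "\<dots> = map_pmf (\<lambda>c. if c then s+1 else s) (map_pmf (\<lambda>x. x \<in> Orb) (pmf_of_set V))"
      by (simp add: map_pmf_comp)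
    also have "\<dots> = step (card V) s"
      unfolding map_mem_pmf_of_set[OF fin VE OV] step_def cO ..
    finally show "map_pmf (\<lambda>x. sixlen (ins v g x) w) (pmf_of_set V) = step (card V) (sixlen g w)"
      unfolding s_def .
  qed
  also have "\<dots> = bind_pmf (sixlen_dist (V - {v}) d w) (step (card V))"
    unfolding sixlen_dist_def bind_map_pmf ..
  finally show "sixlen_dist V d w = bind_pmf (sixlen_dist (V - {v}) d w) (step (card V))" .
qed




lemma exists_fun:
  assumes "finite V" "finite U" "(\<Sum>v\<in>V. d v) = card U"
  shows "\<exists>f \<in> U \<rightarrow>\<^sub>E V. \<forall>y\<in>V. card {u\<in>U. f u = y} = d y"
  using assms
proof (induction V arbitrary: U rule: finite_induct)
  case empty
  then have "U = {}" by simp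
  then show ?case by simp
next
  case (insert y V)
  have sum: "d y + (\<Sum>v\<in>V. d v) = card U" using insert by simp
  then obtain T where T: "T \<subseteq> U" "card T = d y"
    using obtain_subset_with_card_n[of "d y" U] by (metis le_add1)
  have "card (U - T) = (\<Sum>v\<in>V. d v)" using T sum insert(4) by (simp add: card_Diff_subset finite_subset)
  then obtain f0 where f0: "f0 \<in> (U - T) \<rightarrow>\<^sub>E V" "\<forall>z\<in>V. card {u\<in>U-T. f0 u = z} = d z"
    using insert.IH[of "U - T"] insert(4) by auto
  define f where "f u = (if u \<in> T then y else f0 u)" for u
  have fE: "f \<in> U \<rightarrow>\<^sub>E insert y V"
  proof (rule PiE_I)
    fix u assume "u \<in> U" then show "f u \<in> insert y V" using f0(1) unfolding f_def by auto
  next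
    fix u assume "u \<notin> U" then show "f u = undefined" using f0(1) T(1) unfolding f_def by auto
  qed
  have "card {u\<in>U. f u = z} = d z" if z: "z \<in> insert y V" for z
  proof (cases "z = y")
    case True
    have f0V: "f0 u \<in> V" if "u \<in> U - T" for u using f0(1) that by (rule PiE_mem)
    have "{u\<in>U. f u = z} = T" using True T(1) f0V insert(2) unfolding f_def by force
    then show ?thesis using T True by simp
  next
    case False
    then have zV: "z \<in> V" using z by simp
    have "{u\<in>U. f u = z} = {u\<in>U-T. f0 u = z}" using False unfolding f_def by auto
    then show ?thesis using f0(2) zV by simp
  qed
  then show ?case using fE by blast
qed

lemma fgraphs_ne:
  assumes "finite V" "(\<Sum>v\<in>V. d v) = card V"
  shows "fgraphs V d \<noteq> {}"
  using exists_fun[OF assms(1) assms(1) assms(2)] unfolding fgraphs_def by auto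

lemma sixlen_dist_le:
  assumes "s \<in> set_pmf (sixlen_dist V d w)" "finite V" "w \<in> V" "fgraphs V d \<noteq> {}"
  shows "s \<le> card V"
proof -
  obtain f where f: "f \<in> fgraphs V d" "s = sixlen f w"
    using assms fgraphs_finite[of V d] unfolding sixlen_dist_def by auto
  then have "f \<in> V \<rightarrow> V" unfolding fgraphs_def by (auto simp: PiE_iff)
  then show ?thesis using sixlen_props(2)[OF assms(2) _ assms(3)] f by simp
qed

lemma polya_step:
  assumes "s \<le> N"
  shows "bind_pmf (step (N+1) s) (\<lambda>r. polya k r (N+2-r)) = polya (Suc k) s (N+1-s)"
proof -
  have e: "s + (N + 1 - s) = N + 1" using assms by simp
  have "polya (Suc k) s (N+1-s) = bind_pmf (bernoulli_pmf (real s / real (N+1)))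
      (\<lambda>c. if c then polya k (s + 1) (N+1-s) else polya k s (N+1-s + 1))"
    by (simp only: polya.simps e)
  also have "\<dots> = bind_pmf (step (N+1) s) (\<lambda>r. polya k r (N+2-r))"
    unfolding step_def bind_map_pmf
    by (rule bind_pmf_cong[OF refl]) (use assms in \<open>auto simp: Suc_diff_le\<close>)
  finally show ?thesis by simp
qed

lemma main_gen:
  assumes "finite S" "finite V" "S \<subseteq> V - {w}" "w \<in> V" "\<forall>v\<in>S. d v = 1" "fgraphs (V - S) d \<noteq> {}"
  shows "sixlen_dist V d w = bind_pmf (sixlen_dist (V - S) d w) (\<lambda>s. polya (card S) s (card (V - S) + 1 - s))"
  using assms
proof (induction S rule: finite_induct)
  case empty
  then show ?case by (simp add: bind_return_pmf')
next
  case (insert v S)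
  let ?V1 = "V - S"
  have V2: "V - insert v S = ?V1 - {v}" by auto
  have vV1: "v \<in> ?V1" using insert by auto
  have wV1: "w \<in> ?V1" "w \<noteq> v" using insert by auto
  have fin1: "finite ?V1" using insert by simp
  note os = one_step[OF fin1 vV1 wV1, of d, OF _ insert.prems(5)[unfolded V2]]
  have dv: "d v = 1" using insert by simp
  have ne1: "fgraphs ?V1 d \<noteq> {}" using os(1)[OF dv] .
  have IH: "sixlen_dist V d w = bind_pmf (sixlen_dist ?V1 d w) (\<lambda>s. polya (card S) s (card ?V1 + 1 - s))"
    using insert.IH insert ne1 by auto
  have c1: "card ?V1 = card (?V1 - {v}) + 1" using vV1 fin1
    by (metis card_Suc_Diff1 Suc_eq_plus1)
  have "sixlen_dist V d w = bind_pmf (sixlen_dist (?V1 - {v}) d w)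
      (\<lambda>s. bind_pmf (step (card ?V1) s) (\<lambda>r. polya (card S) r (card ?V1 + 1 - r)))"
    unfolding IH os(2)[OF dv] bind_assoc_pmf ..
  also have "\<dots> = bind_pmf (sixlen_dist (?V1 - {v}) d w)
      (\<lambda>s. polya (Suc (card S)) s (card (?V1 - {v}) + 1 - s))"
  proof (rule bind_pmf_cong[OF refl])
    fix s assume "s \<in> set_pmf (sixlen_dist (?V1 - {v}) d w)"
    then have "s \<le> card (?V1 - {v})"
      using sixlen_dist_le[of s "?V1 - {v}" d w] fin1 wV1 insert.prems(5) V2 by auto
    from polya_step[OF this, of "card S"]
    show "bind_pmf (step (card ?V1) s) (\<lambda>r. polya (card S) r (card ?V1 + 1 - r))
        = polya (Suc (card S)) s (card (?V1 - {v}) + 1 - s)"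
      unfolding c1 by (simp add: add.commute)
  qed
  finally show ?case using insert(1,2) V2 by simp
qed




theorem corollary4p7:
  fixes n w :: nat and d :: "nat \<Rightarrow> nat" and S :: "nat set"
  assumes "(\<Sum>j\<in>{1..n}. d j) = n"
    and "w \<in> {1..n}"
    and "nhat n d < n"
    and "S \<subseteq> {1..n} - {w}"
    and "card S = n - nhat n d"
    and "\<forall>v\<in>S. d v = 1"
  shows "sixlen_dist {1..n} d w =
         bind_pmf (sixlen_dist ({1..n} - S) d w)
           (\<lambda>s. polya (n - nhat n d) s (nhat n d + 1 - s))"
proof -
  have finS: "finite S" using assms(4) finite_subset by blast
  have SV: "S \<subseteq> {1..n}" using assms(4) by auto
  have cVS: "card ({1..n} - S) = nhat n d" using assms(3,5) SV finS by (simp add: card_Diff_subset)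
  have sS: "(\<Sum>v\<in>S. d v) = card S" using assms(6) by simp
  have "(\<Sum>v\<in>{1..n} - S. d v) = n - card S" using sum.subset_diff[of S "{1..n}" d] SV sS assms(1) by simp
  then have "(\<Sum>v\<in>{1..n} - S. d v) = card ({1..n} - S)" using cVS assms(3,5) by simp
  then have ne: "fgraphs ({1..n} - S) d \<noteq> {}" by (intro fgraphs_ne) auto
  show ?thesis using main_gen[OF finS _ assms(4,2,6) ne] cVS assms(5) by simp
qed


end
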